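(* Let $n,k$ be integers with $2<2k\le n$ such that the integer program $( * )$ has a solution but no trivial solution, and let $2r+1$ be the optimal value of $( * )$ (so that $g_{odd}(\mathrm{Pet}(n,k))=2r+3$). Then there is no homomorphism $\mathrm{Pet}(n,k)\to C_{2r+3}$.
   Context: For integers $n,k$ with $2<2k\le n$, the generalized Petersen graph $\mathrm{Pet}(n,k)$ has vertex set $\{u_0,\dots,u_{n-1}\}\cup\{v_0,\dots,v_{n-1}\}$ and edge set $\{u_iu_{i+1}\}\cup\{u_iv_i\}\cup\{v_iv_{i+k}\}$, indices modulo $n$. The integer program $( * )$ is: minimize $\mathsf{u}+\mathsf{v}_++\mathsf{v}_-$ over integers $\mathsf{u},\mathsf{v}_+,\mathsf{v}_-,r\ge 0$ and $t\in\mathbb{Z}$ subject to $\mathsf{u}+k(\mathsf{v}_+-\mathsf{v}_-)=tn$ and $\mathsf{u}+\mathsf{v}_++\mathsf{v}_-=2r+1$. A solution is a minimizer; it is trivial if $\mathsf{u}=0$ or $\mathsf{v}_++\mathsf{v}_-=0$. $C_m$ is the cycle of length $m$; $g_{odd}$ is the odd girth. A homomorphism $G\to H$ is a map $V(G)\to V(H)$ sending edges to edges. *)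

theory Defs
  imports Main
begin

(* Generalized Petersen graph Pet(n,k): vertex (False,i) is u_i, (True,i) is v_i, 0 <= i < n. *)
definition pet_vertices :: "nat \<Rightarrow> (bool \<times> nat) set" where
  "pet_vertices n = {(b, i). i < n}"

definition pet_adj :: "nat \<Rightarrow> nat \<Rightarrow> bool \<times> nat \<Rightarrow> bool \<times> nat \<Rightarrow> bool" where
  "pet_adj n k x y \<longleftrightarrow> x \<in> pet_vertices n \<and> y \<in> pet_vertices n \<and>
     (case (x, y) of
        ((False, i), (False, j)) \<Rightarrow> j = (i + 1) mod n \<or> i = (j + 1) mod n
      | ((False, i), (True, j)) \<Rightarrow> i = j
      | ((True, i), (False, j)) \<Rightarrow> i = j
      | ((True, i), (True, j)) \<Rightarrow> j = (i + k) mod n \<or> i = (j + k) mod n)"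

definition cycle_adj :: "nat \<Rightarrow> nat \<Rightarrow> nat \<Rightarrow> bool" where
  "cycle_adj m a b \<longleftrightarrow> a < m \<and> b < m \<and> (b = (a + 1) mod m \<or> a = (b + 1) mod m)"

definition pet_cycle_hom :: "nat \<Rightarrow> nat \<Rightarrow> nat \<Rightarrow> (bool \<times> nat \<Rightarrow> nat) \<Rightarrow> bool" where
  "pet_cycle_hom n k m f \<longleftrightarrow>
     (\<forall>x\<in>pet_vertices n. f x < m) \<and>
     (\<forall>x y. pet_adj n k x y \<longrightarrow> cycle_adj m (f x) (f y))"

definition ip_feasible :: "nat \<Rightarrow> nat \<Rightarrow> nat \<Rightarrow> nat \<Rightarrow> nat \<Rightarrow> nat \<Rightarrow> int \<Rightarrow> bool" where
  "ip_feasible n k u vp vm r t \<longleftrightarrow>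
     int u + int k * (int vp - int vm) = t * int n \<and> u + vp + vm = 2 * r + 1"

definition ip_solution :: "nat \<Rightarrow> nat \<Rightarrow> nat \<Rightarrow> nat \<Rightarrow> nat \<Rightarrow> nat \<Rightarrow> int \<Rightarrow> bool" where
  "ip_solution n k u vp vm r t \<longleftrightarrow> ip_feasible n k u vp vm r t \<and>
     (\<forall>u' vp' vm' r' t'. ip_feasible n k u' vp' vm' r' t' \<longrightarrow> u + vp + vm \<le> u' + vp' + vm')"

definition ip_trivial :: "nat \<Rightarrow> nat \<Rightarrow> nat \<Rightarrow> bool" where
  "ip_trivial u vp vm \<longleftrightarrow> u = 0 \<or> vp + vm = 0"

end

theory Submission
  imports Defs
begin

definition idx :: "nat \<Rightarrow> int \<Rightarrow> nat" where
  "idx n x = nat (x mod int n)"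

lemma idx_lt: "n > 0 \<Longrightarrow> idx n x < n"
  unfolding idx_def by (simp add: nat_less_iff)

lemma idx_add: assumes n: "n > 0" shows "idx n (x + int c) = (idx n x + c) mod n"
proof -
  have "int (nat ((x + int c) mod int n)) = (x + int c) mod int n" using n by simp
  moreover have "int ((nat (x mod int n) + c) mod n) = (x mod int n + int c) mod int n"
    using n by (simp add: zmod_int)
  moreover have "(x mod int n + int c) mod int n = (x + int c) mod int n"
    by (simp add: mod_add_left_eq)
  ultimately show ?thesis by (metis idx_def of_nat_eq_iff)
qed

lemma idx_period: "idx n (x + t * int n) = idx n x"
  unfolding idx_def by simp

lemma adj_out: "n > 0 \<Longrightarrow> pet_adj n k (False, idx n x) (False, idx n (x+1))"
  using idx_add[of n x 1] idx_lt[of n] by (simp add: pet_adj_def pet_vertices_def)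

lemma adj_spoke1: "n > 0 \<Longrightarrow> pet_adj n k (False, idx n x) (True, idx n x)"
  using idx_lt[of n] by (simp add: pet_adj_def pet_vertices_def)

lemma adj_spoke2: "n > 0 \<Longrightarrow> pet_adj n k (True, idx n x) (False, idx n x)"
  using idx_lt[of n] by (simp add: pet_adj_def pet_vertices_def)

lemma adj_in1: "n > 0 \<Longrightarrow> pet_adj n k (True, idx n x) (True, idx n (x + int k))"
  using idx_add[of n x k] idx_lt[of n] by (simp add: pet_adj_def pet_vertices_def)

lemma adj_in2: "n > 0 \<Longrightarrow> pet_adj n k (True, idx n x) (True, idx n (x - int k))"
  using idx_add[of n "x - int k" k] idx_lt[of n] by (simp add: pet_adj_def pet_vertices_def)

lemma excl:
  fixes m a b :: nat
  assumes "m \<ge> 3" "a < m" "b < m" "b = (a + 1) mod m" "a = (b + 1) mod m"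
  shows False
proof (cases "a + 1 < m")
  case True
  then have b: "b = a + 1" using assms(4) by simp
  show False
  proof (cases "a + 2 < m")
    case True
    then have "(b + 1) mod m = b + 1" using b by simp
    then show False using assms(5) b by linarith
  next
    case False
    then have "a + 2 = m" using \<open>a + 1 < m\<close> by simp
    then have "(b + 1) mod m = 0" using b by simp
    then show False using assms(5) \<open>a + 2 = m\<close> assms(1) by linarith
  qed
next
  case False
  then have "a + 1 = m" using assms(2) by simp
  then have "b = 0" using assms(4) by simp
  then have "(b + 1) mod m = 1" using assms(1) by simp
  then have "a = 1" using assms(5) by linarith
  then show False using \<open>a + 1 = m\<close> assms(1) by simp
qed

lemma walk:
  fixes g :: "nat \<Rightarrow> nat" and m :: nat
  assumes m: "odd m" "m \<ge> 3"
    and adj: "\<forall>i<m. g (Suc i) = (g i + 1) mod m \<or> g i = (g (Suc i) + 1) mod m"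
    and bd: "\<forall>i\<le>m. g i < m" and cl: "g m = g 0"
  shows "(\<forall>i<m. g (Suc i) = (g i + 1) mod m) \<or> (\<forall>i<m. g i = (g (Suc i) + 1) mod m)"
proof -
  define P where "P j = card {i. i < j \<and> g (Suc i) = (g i + 1) mod m}" for j
  have Psuc: "P (Suc j) = P j + (if g (Suc j) = (g j + 1) mod m then 1 else 0)" for j
  proof -
    have "{i. i < Suc j \<and> g (Suc i) = (g i + 1) mod m} =
      (if g (Suc j) = (g j + 1) mod m then insert j {i. i < j \<and> g (Suc i) = (g i + 1) mod m}
       else {i. i < j \<and> g (Suc i) = (g i + 1) mod m})" by (auto simp: less_Suc_eq)
    then show ?thesis unfolding P_def by simp
  qed
  have key: "j \<le> m \<Longrightarrow> int (g j) mod int m = (int (g 0) + 2 * int (P j) - int j) mod int m" for j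
  proof (induction j)
    case 0
    then show ?case by (simp add: P_def)
  next
    case (Suc j)
    then have IH: "int (g j) mod int m = (int (g 0) + 2 * int (P j) - int j) mod int m" by simp
    show ?case
    proof (cases "g (Suc j) = (g j + 1) mod m")
      case True
      then have "int (g (Suc j)) mod int m = (int (g j) + 1) mod int m"
        by (simp add: zmod_int add.commute)
      also have "\<dots> = (int (g j) mod int m + 1) mod int m" by (simp add: mod_add_left_eq)
      also have "\<dots> = ((int (g 0) + 2 * int (P j) - int j) mod int m + 1) mod int m" using IH by simp
      also have "\<dots> = ((int (g 0) + 2 * int (P j) - int j) + 1) mod int m"
        by (rule mod_add_left_eq)
      also have "\<dots> = (int (g 0) + 2 * int (P (Suc j)) - int (Suc j)) mod int m"
        using True by (simp add: Psuc algebra_simps)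
      finally show ?thesis .
    next
      case False
      have "j < m" using Suc.prems by simp
      then have F: "g j = (g (Suc j) + 1) mod m" using adj False by blast
      have "int (g (Suc j)) mod int m = (int (g j) - 1) mod int m"
      proof -
        have "int (g j) mod int m = (int (g (Suc j)) + 1) mod int m" using F by (simp add: zmod_int add.commute)
        then have "(int (g j) - 1) mod int m = ((int (g (Suc j)) + 1) - 1) mod int m"
          by (metis mod_diff_left_eq)
        then show ?thesis by simp
      qed
      also have "\<dots> = (int (g j) mod int m - 1) mod int m" by (simp add: mod_diff_left_eq)
      also have "\<dots> = ((int (g 0) + 2 * int (P j) - int j) mod int m - 1) mod int m" using IH by simp
      also have "\<dots> = ((int (g 0) + 2 * int (P j) - int j) - 1) mod int m"
        by (rule mod_diff_left_eq)
      also have "\<dots> = (int (g 0) + 2 * int (P (Suc j)) - int (Suc j)) mod int m"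
        using False by (simp add: Psuc algebra_simps)
      finally show ?thesis .
    qed
  qed
  have "(int (g 0) + 2 * int (P m) - int m) mod int m = int (g 0) mod int m"
    using key[of m] cl by simp
  then have "(int (g 0) + 2 * int (P m)) mod int m = int (g 0) mod int m"
    by (metis add_diff_eq minus_mod_self2)
  then have "(2 * int (P m)) mod int m = 0"
    by (smt (verit, ccfv_SIG) mod_eqE mod_mult_self1_is_0)
  then have "int m dvd 2 * int (P m)" by (simp add: mod_eq_0_iff_dvd)
  then have "m dvd 2 * P m" by (metis of_nat_dvd_iff of_nat_mult of_nat_numeral)
  then have d: "m dvd P m" using m(1)
    by (metis coprime_dvd_mult_right_iff coprime_right_2_iff_odd)
  have Ple: "P m \<le> m" unfolding P_def by (rule order_trans[OF card_mono[of "{..<m}"]]) auto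
  from d Ple have "P m = 0 \<or> P m = m"
    by (metis dvd_imp_le le_antisym neq0_conv)
  then show ?thesis
  proof
    assume "P m = 0"
    then have "{i. i < m \<and> g (Suc i) = (g i + 1) mod m} = {}" unfolding P_def by simp
    then show ?thesis using adj by blast
  next
    assume "P m = m"
    then have "card {i. i < m \<and> g (Suc i) = (g i + 1) mod m} = card {..<m}" unfolding P_def by simp
    then have "{i. i < m \<and> g (Suc i) = (g i + 1) mod m} = {..<m}"
      by (intro card_subset_eq) auto
    then show ?thesis by blast
  qed
qed

theorem mainTheorem18:
  fixes n k u vp vm r :: nat and t :: int
  assumes "2 < 2 * k" and "2 * k \<le> n"
    and "\<forall>u' vp' vm' r' t'. ip_solution n k u' vp' vm' r' t' \<longrightarrow> \<not> ip_trivial u' vp' vm'"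
    and "ip_solution n k u vp vm r t"
  shows "\<not> (\<exists>f. pet_cycle_hom n k (2 * r + 3) f)"
proof
  assume "\<exists>f. pet_cycle_hom n k (2 * r + 3) f"
  then obtain f where hom: "pet_cycle_hom n k (2 * r + 3) f" by blast
  have fe: "int u + int k * (int vp - int vm) = t * int n" and sm: "u + vp + vm = 2 * r + 1"
    using assms(4) unfolding ip_solution_def ip_feasible_def by auto
  have n0: "n > 0" using assms(1,2) by simp
  define m where "m = 2 * r + 3"
  have mdef: "m = u + vp + vm + 2" using sm m_def by simp
  have modd: "odd m" and m3: "m \<ge> 3" using m_def by auto
  define q where "q l = int (min l vp) * int k - int (l - vp) * int k" for l
  have q0: "q 0 = 0" by (simp add: q_def)
  have qs1: "l < vp \<Longrightarrow> q (Suc l) = q l + int k" for l by (simp add: q_def algebra_simps)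
  have qs2: "\<not> l < vp \<Longrightarrow> q (Suc l) = q l - int k" for l
    by (simp add: q_def algebra_simps Suc_diff_le)
  have qend: "int u + q (vp + vm) = t * int n" using fe by (simp add: q_def algebra_simps)
  define w where "w j i = (if i \<le> u then (False, idx n (j + int i))
      else if i \<le> u + 1 + vp + vm then (True, idx n (j + int u + q (i - u - 1)))
      else (False, idx n j))" for j :: int and i :: nat
  have wv: "w j i \<in> pet_vertices n" for j i
    using idx_lt[OF n0] by (simp add: w_def pet_vertices_def)
  have wlast: "w j (u + 1 + vp + vm) = (True, idx n j)" for j
  proof -
    have h: "j + int u + q (vp + vm) = j + t * int n" using qend by simp
    have "idx n (j + int u + q (vp + vm)) = idx n j" unfolding h by (rule idx_period)
    then show ?thesis by (simp add: w_def)
  qed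
  have wm: "w j m = (False, idx n j)" for j by (simp add: w_def mdef)
  have wadj: "i < m \<Longrightarrow> pet_adj n k (w j i) (w j (Suc i))" for j i
  proof -
    assume im: "i < m"
    consider "i < u" | "i = u" | "u < i" "Suc i \<le> u + 1 + vp + vm" | "i = u + 1 + vp + vm"
      using im mdef by linarith
    then show ?thesis
    proof cases
      case 1
      have e: "j + int (Suc i) = (j + int i) + 1" by simp
      have "w j i = (False, idx n (j + int i))" "w j (Suc i) = (False, idx n ((j + int i) + 1))"
        using 1 by (simp_all add: w_def ac_simps)
      then show ?thesis using adj_out[OF n0] by simp
    next
      case 2
      have "w j i = (False, idx n (j + int u))" "w j (Suc i) = (True, idx n (j + int u))"
        using 2 q0 by (simp_all add: w_def)
      then show ?thesis using adj_spoke1[OF n0] by simp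
    next
      case 3
      have e: "Suc i - u - 1 = Suc (i - u - 1)" using 3 by simp
      have a: "w j i = (True, idx n (j + int u + q (i - u - 1)))" using 3 by (simp add: w_def)
      have b: "w j (Suc i) = (True, idx n (j + int u + q (Suc (i - u - 1))))"
        using 3 e by (simp add: w_def)
      show ?thesis
      proof (cases "i - u - 1 < vp")
        case True
        then have hh: "j + int u + q (Suc (i - u - 1)) = (j + int u + q (i - u - 1)) + int k"
          using qs1 by simp
        show ?thesis unfolding a b hh by (rule adj_in1[OF n0])
      next
        case False
        then have hh: "j + int u + q (Suc (i - u - 1)) = (j + int u + q (i - u - 1)) - int k"
          using qs2 by simp
        show ?thesis unfolding a b hh by (rule adj_in2[OF n0])
      qed
    next
      case 4
      then have "Suc i = m" using mdef by simp
      then show ?thesis using 4 wlast wm adj_spoke2[OF n0] by simp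
    qed
  qed
  define R where "R x y \<longleftrightarrow> f y = (f x + 1) mod m" for x y
  have fl: "x \<in> pet_vertices n \<Longrightarrow> f x < m" for x
    using hom unfolding pet_cycle_hom_def m_def by blast
  have Rex: "R x y \<Longrightarrow> R y x \<Longrightarrow> x \<in> pet_vertices n \<Longrightarrow> y \<in> pet_vertices n \<Longrightarrow> False" for x y
    unfolding R_def using excl[OF m3, of "f x" "f y"] fl by blast
  have dirs: "(\<forall>i<m. R (w j i) (w j (Suc i))) \<or> (\<forall>i<m. R (w j (Suc i)) (w j i))" for j
  proof -
    have ca: "cycle_adj m (f (w j i)) (f (w j (Suc i)))" if "i < m" for i
      using hom wadj[OF that] unfolding pet_cycle_hom_def m_def by blast
    have "(\<forall>i<m. f (w j (Suc i)) = (f (w j i) + 1) mod m) \<or> (\<forall>i<m. f (w j i) = (f (w j (Suc i)) + 1) mod m)"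
    proof (rule walk[OF modd m3])
      show "\<forall>i<m. f (w j (Suc i)) = (f (w j i) + 1) mod m \<or> f (w j i) = (f (w j (Suc i)) + 1) mod m"
        using ca unfolding cycle_adj_def by blast
      show "\<forall>i\<le>m. f (w j i) < m" using fl wv by blast
      show "f (w j m) = f (w j 0)" using wm by (simp add: w_def)
    qed
    then show ?thesis unfolding R_def by blast
  qed
  have vF: "(False, idx n x) \<in> pet_vertices n" and vT: "(True, idx n x) \<in> pet_vertices n" for x
    using idx_lt[OF n0] by (auto simp: pet_vertices_def)
  define s where "s x \<longleftrightarrow> R (False, idx n x) (True, idx n x)" for x
  define ob where "ob x \<longleftrightarrow> R (False, idx n x) (False, idx n (x + 1))" for x
  have FA: "s (j + int u) \<longleftrightarrow> \<not> s j" for j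
  proof -
    have w1: "w j u = (False, idx n (j + int u))" "w j (Suc u) = (True, idx n (j + int u))"
      using q0 by (simp_all add: w_def)
    have w2: "w j (u + 1 + vp + vm) = (True, idx n j)" "w j (Suc (u + 1 + vp + vm)) = (False, idx n j)"
      using wlast wm mdef by simp_all
    have l1: "u < m" "u + 1 + vp + vm < m" using mdef by simp_all
    from dirs[of j] show ?thesis
    proof
      assume A: "\<forall>i<m. R (w j i) (w j (Suc i))"
      from A l1 w1 w2 have "s (j + int u)" "R (True, idx n j) (False, idx n j)"
        unfolding s_def by (metis)+
      then show ?thesis unfolding s_def using Rex vF vT by blast
    next
      assume A: "\<forall>i<m. R (w j (Suc i)) (w j i)"
      from A l1 w1 w2 have "R (True, idx n (j + int u)) (False, idx n (j + int u))" "s j"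
        unfolding s_def by (metis)+
      then show ?thesis unfolding s_def using Rex vF vT by blast
    qed
  qed
  have FB: "i < u \<Longrightarrow> ob (j + int i) \<longleftrightarrow> s (j + int u)" for i j
  proof -
    assume iu: "i < u"
    have w1: "w j u = (False, idx n (j + int u))" "w j (Suc u) = (True, idx n (j + int u))"
      using q0 by (simp_all add: w_def)
    have e: "j + int (Suc i) = (j + int i) + 1" by simp
    have w3: "w j i = (False, idx n (j + int i))" "w j (Suc i) = (False, idx n ((j + int i) + 1))"
      using iu by (simp_all add: w_def ac_simps)
    have l1: "u < m" "i < m" using mdef iu by simp_all
    from dirs[of j] show ?thesis
    proof
      assume A: "\<forall>i<m. R (w j i) (w j (Suc i))"
      from A l1 w1 w3 have "s (j + int u)" "ob (j + int i)"
        unfolding s_def ob_def by (metis)+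
      then show ?thesis by blast
    next
      assume A: "\<forall>i<m. R (w j (Suc i)) (w j i)"
      from A l1 w1 w3 have "R (True, idx n (j + int u)) (False, idx n (j + int u))"
          "R (False, idx n ((j + int i) + 1)) (False, idx n (j + int i))"
        by (metis)+
      then show ?thesis unfolding s_def ob_def using Rex vF vT by blast
    qed
  qed
  have speriod: "s (x + int n) = s x" for x
    using idx_period[of n x 1] unfolding s_def by simp
  consider "u = 0" | "u = 1" | "u \<ge> 2" by linarith
  then show False
  proof cases
    case 1
    then show False using FA[of 0] by simp
  next
    case 2
    have alt: "s (x + 1) \<longleftrightarrow> \<not> s x" for x using FA[of x] 2 by simp
    have it: "s (x + int l) \<longleftrightarrow> (if even l then s x else \<not> s x)" for x l
    proof (induction l)
      case 0 then show ?case by simp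
    next
      case (Suc l)
      have e: "x + int (Suc l) = (x + int l) + 1" by simp
      show ?case unfolding e using alt[of "x + int l"] Suc by simp
    qed
    have "even n" using it[of 0 n] speriod[of 0] by (auto split: if_splits)
    then obtain c where c: "n = 2 * c" by blast
    have h: "int vp - int vm = 2 * (int r - int vm)" using sm 2 by simp
    have f1: "1 + int k * (int vp - int vm) = t * int n" using fe 2 by simp
    have f2: "1 + int k * (2 * (int r - int vm)) = t * int (2 * c)"
      using f1 unfolding h c .
    have "even (t * int (2 * c))" by simp
    moreover have "odd (1 + int k * (2 * (int r - int vm)))" by simp
    ultimately show False using f2 by (metis (no_types))
  next
    case 3
    have st: "s (x + 1) = s x" for x
    proof -
      have "ob ((x - int u) + int 1) \<longleftrightarrow> s ((x - int u) + int u)" using FB[of 1 "x - int u"] 3 by simp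
      moreover have "ob ((x - int u + 1) + int 0) \<longleftrightarrow> s ((x - int u + 1) + int u)" using FB[of 0 "x - int u + 1"] 3 by simp
      ultimately show ?thesis by (simp add: algebra_simps)
    qed
    have "s (x + int l) = s x" for x l
    proof (induction l)
      case 0 then show ?case by simp
    next
      case (Suc l)
      have e: "x + int (Suc l) = (x + int l) + 1" by simp
      show ?case unfolding e using st[of "x + int l"] Suc by simp
    qed
    then have "s (0 + int u) = s 0" .
    then show False using FA[of 0] by simp
  qed
qed

end
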